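(* Let $\mathcal{X}$ be a finite nonempty set of types, let $n=(n_x)_{x\in\mathcal{X}}$ be nonnegative integers such that $n_x$ is even for every $x\in\mathcal{X}$, and let $\Phi=(\Phi_{xy})_{x,y\in\mathcal{X}}$ be a real matrix with $\Phi_{xy}=\Phi_{yx}$ for all $x,y$. Then $\mathcal{W}_{\mathcal{P}}(n,\Phi)=\mathcal{W}_{\mathcal{B}}(n,n,\Phi/2)$.
   Context: Roommate matching with transferable utility: $n_x$ is the number of individuals of type $x$; a pair of types $\{x,y\}$ (possibly $x=y$) generates joint surplus $\Phi_{xy}$; singles get utility $0$. Feasible roommate matchings: $\mathcal{P}(n)=\{\mu=(\mu_{xy})_{x,y\in\mathcal{X}}:\ \mu_{xy}\in\mathbb{N},\ \mu_{xy}=\mu_{yx},\ 2\mu_{xx}+\sum_{y\neq x}\mu_{xy}\le n_x\ \forall x\}$. Total surplus $S_R(\mu;\Phi)=\sum_x\mu_{xx}\Phi_{xx}+\sum_{x\neq y}\mu_{xy}\Phi_{xy}/2$, and $\mathcal{W}_{\mathcal{P}}(n,\Phi)=\max_{\mu\in\mathcal{P}(n)}S_R(\mu;\Phi)$. Bipartite problem: $\mathcal{B}(n,n)=\{\nu\in\mathbb{N}^{\mathcal{X}\times\mathcal{X}}:\ \sum_y\nu_{xy}\le n_x\ \forall x,\ \sum_x\nu_{xy}\le n_y\ \forall y\}$ and $\mathcal{W}_{\mathcal{B}}(n,n,\Phi/2)=\max_{\nu\in\mathcal{B}(n,n)}\sum_{x,y}\nu_{xy}\Phi_{xy}/2$.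 *)

theory Defs
  imports Main Complex_Main
begin

text \<open>Types form a finite nonempty type 'x (every HOL type is nonempty).
  Populations n :: 'x => nat, surplus Phi :: 'x => 'x => real,
  matchings are nat-valued matrices 'x => 'x => nat.\<close>

definition roommate_matchings :: "('x::finite \<Rightarrow> nat) \<Rightarrow> ('x \<Rightarrow> 'x \<Rightarrow> nat) set" where
  "roommate_matchings n = {\<mu>. (\<forall>x y. \<mu> x y = \<mu> y x) \<and>
      (\<forall>x. 2 * \<mu> x x + (\<Sum>y\<in>UNIV - {x}. \<mu> x y) \<le> n x)}"

definition S_R :: "('x::finite \<Rightarrow> 'x \<Rightarrow> nat) \<Rightarrow> ('x \<Rightarrow> 'x \<Rightarrow> real) \<Rightarrow> real" where
  "S_R \<mu> \<Phi> = (\<Sum>x\<in>UNIV. real (\<mu> x x) * \<Phi> x x)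
      + (\<Sum>p\<in>{(x,y). x \<noteq> y}. real (\<mu> (fst p) (snd p)) * \<Phi> (fst p) (snd p) / 2)"

definition W_P :: "('x::finite \<Rightarrow> nat) \<Rightarrow> ('x \<Rightarrow> 'x \<Rightarrow> real) \<Rightarrow> real" where
  "W_P n \<Phi> = Max ((\<lambda>\<mu>. S_R \<mu> \<Phi>) ` roommate_matchings n)"

definition bipartite_matchings :: "('x::finite \<Rightarrow> nat) \<Rightarrow> ('x \<Rightarrow> nat) \<Rightarrow> ('x \<Rightarrow> 'x \<Rightarrow> nat) set" where
  "bipartite_matchings n m = {\<nu>. (\<forall>x. (\<Sum>y\<in>UNIV. \<nu> x y) \<le> n x) \<and>
      (\<forall>y. (\<Sum>x\<in>UNIV. \<nu> x y) \<le> m y)}"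

definition W_B :: "('x::finite \<Rightarrow> nat) \<Rightarrow> ('x \<Rightarrow> nat) \<Rightarrow> ('x \<Rightarrow> 'x \<Rightarrow> real) \<Rightarrow> real" where
  "W_B n m \<Psi> = Max ((\<lambda>\<nu>. \<Sum>x\<in>UNIV. \<Sum>y\<in>UNIV. real (\<nu> x y) * \<Psi> x y) ` bipartite_matchings n m)"

end

theory Submission
  imports Defs "HOL-Library.FuncSet"
begin

definition E :: "'a \<Rightarrow> 'a \<Rightarrow> 'a \<Rightarrow> 'a \<Rightarrow> nat" where
  "E a b = (\<lambda>i j. if i = a \<and> j = b then 1 else 0)"
definition pl :: "('a \<Rightarrow> 'a \<Rightarrow> nat) \<Rightarrow> ('a \<Rightarrow> 'a \<Rightarrow> nat) \<Rightarrow> 'a \<Rightarrow> 'a \<Rightarrow> nat" where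
  "pl f g = (\<lambda>i j. f i j + g i j)"
definition rs :: "('a::finite \<Rightarrow> 'a \<Rightarrow> nat) \<Rightarrow> 'a \<Rightarrow> nat" where
  "rs f x = (\<Sum>y\<in>UNIV. f x y)"
definition cs :: "('a::finite \<Rightarrow> 'a \<Rightarrow> nat) \<Rightarrow> 'a \<Rightarrow> nat" where
  "cs f y = (\<Sum>x\<in>UNIV. f x y)"
definition mass :: "('a::finite \<Rightarrow> 'a \<Rightarrow> nat) \<Rightarrow> nat" where
  "mass f = (\<Sum>x\<in>UNIV. rs f x)"
definition bal :: "('a::finite \<Rightarrow> 'a \<Rightarrow> nat) \<Rightarrow> ('a \<Rightarrow> 'a \<Rightarrow> nat) \<Rightarrow> bool" where
  "bal f f1 \<longleftrightarrow> (\<forall>x y. f1 x y \<le> f x y) \<and>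
     (\<forall>x. 2*rs f1 x \<le> rs f x + 1 \<and> rs f x \<le> 2*rs f1 x + 1) \<and>
     (\<forall>y. 2*cs f1 y \<le> cs f y + 1 \<and> cs f y \<le> 2*cs f1 y + 1)"

lemma pl_app[simp]: "pl f g i j = f i j + g i j" by (simp add: pl_def)
lemma E_app[simp]: "E a b i j = (if i = a \<and> j = b then 1 else 0)" by (simp add: E_def)

lemma rs_pl[simp]: "rs (pl f g) x = rs f x + rs g x"
  by (simp add: rs_def sum.distrib)
lemma cs_pl[simp]: "cs (pl f g) x = cs f x + cs g x"
  by (simp add: cs_def sum.distrib)
lemma rs_E[simp]: "rs (E a b) x = (if x = a then 1 else 0)"
  by (simp add: rs_def)
lemma cs_E[simp]: "cs (E a b) y = (if y = b then 1 else 0)"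
  by (simp add: cs_def)
lemma mass_pl[simp]: "mass (pl f g) = mass f + mass g"
  by (simp add: mass_def sum.distrib)
lemma mass_E[simp]: "mass (E a b) = 1"
  by (simp add: mass_def)

lemma decomp: assumes "f a b \<ge> 1" shows "\<exists>f0. f = pl f0 (E a b)"
proof -
  have "f = pl (\<lambda>i j. f i j - E a b i j) (E a b)"
    using assms by (auto simp: fun_eq_iff)
  then show ?thesis by blast
qed

lemma rs_mono: "(\<forall>x y. g x y \<le> f x y) \<Longrightarrow> rs g x \<le> rs f x"
  by (simp add: rs_def sum_mono)
lemma cs_mono: "(\<forall>x y. g x y \<le> f x y) \<Longrightarrow> cs g x \<le> cs f x"
  by (simp add: cs_def sum_mono)

lemma caseA:
  fixes f :: "'a::finite \<Rightarrow> 'a \<Rightarrow> nat"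
  assumes IH: "\<And>g::'a::finite\<Rightarrow>'a\<Rightarrow>nat. mass g < mass f \<Longrightarrow> \<exists>g1. bal g g1"
    and "f a b \<ge> 2"
  shows "\<exists>f1. bal f f1"
proof -
  obtain g where g: "f = pl g (E a b)" using decomp[of f a b] assms by auto
  have "g a b \<ge> 1" using assms(2) g by simp
  then obtain f0 where f0: "g = pl f0 (E a b)" using decomp[of g a b] by auto
  have m: "mass f0 < mass f" using g f0 by simp
  obtain h where h: "bal f0 h" using IH[OF m] by blast
  have "bal f (pl h (E a b))"
    using h unfolding g f0 bal_def by (auto intro: le_SucI)
  then show ?thesis by blast
qed

lemma caseB:
  fixes f :: "'a::finite \<Rightarrow> 'a \<Rightarrow> nat"
  assumes IH: "\<And>g::'a::finite\<Rightarrow>'a\<Rightarrow>nat. mass g < mass f \<Longrightarrow> \<exists>g1. bal g g1"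
    and "f x a \<ge> 1" "f x b \<ge> 1" "f z b \<ge> 1" "a \<noteq> b" "x \<noteq> z"
  shows "\<exists>f1. bal f f1"
proof -
  obtain g1 where g1: "f = pl g1 (E x a)" using decomp[of f x a] assms by auto
  have "g1 x b \<ge> 1" using assms g1 by simp
  then obtain g2 where g2: "g1 = pl g2 (E x b)" using decomp[of g1 x b] by auto
  have "g2 z b \<ge> 1" using assms g1 g2 by simp
  then obtain f0 where f0: "g2 = pl f0 (E z b)" using decomp[of g2 z b] by auto
  have fe: "f = pl (pl (pl f0 (E z b)) (E x b)) (E x a)" using g1 g2 f0 by simp
  let ?f' = "pl f0 (E z a)"
  have m: "mass ?f' < mass f" using fe by simp
  obtain h where h: "bal ?f' h" using IH[OF m] by blast
  show ?thesis
  proof (cases "h z a \<ge> 1")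
    case True
    then obtain h0 where h0: "h = pl h0 (E z a)" using decomp[of h z a] by auto
    have p: "\<forall>i j. h0 i j \<le> f0 i j"
    proof (intro allI)
      fix i j show "h0 i j \<le> f0 i j" using h unfolding bal_def h0
        by (auto dest!: spec2[of _ i j] split: if_splits)
    qed
    have "bal f (pl (pl h0 (E x a)) (E z b))"
      using h p assms(5,6) unfolding fe h0 bal_def
      by (auto simp: add_mono intro: le_SucI split: if_splits)
    then show ?thesis by blast
  next
    case False
    have p: "\<forall>i j. h i j \<le> f0 i j"
    proof (intro allI)
      fix i j show "h i j \<le> f0 i j" using h False unfolding bal_def
        by (auto dest!: spec2[of _ i j] split: if_splits)
    qed
    have "bal f (pl h (E x b))"
      using h p assms(5,6) unfolding fe bal_def
      by (auto simp: add_mono intro: le_SucI split: if_splits)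
    then show ?thesis by blast
  qed
qed


lemma caseD:
  fixes f :: "'a::finite \<Rightarrow> 'a \<Rightarrow> nat"
  assumes IH: "\<And>g::'a::finite\<Rightarrow>'a\<Rightarrow>nat. mass g < mass f \<Longrightarrow> \<exists>g1. bal g g1"
    and "f x a \<ge> 1" "f x b \<ge> 1" "a \<noteq> b" "cs f a = 1"
  shows "\<exists>f1. bal f f1"
proof -
  obtain g1 where g1: "f = pl g1 (E x a)" using decomp[of f x a] assms by auto
  have "g1 x b \<ge> 1" using assms g1 by simp
  then obtain f0 where f0: "g1 = pl f0 (E x b)" using decomp[of g1 x b] by auto
  have fe: "f = pl (pl f0 (E x b)) (E x a)" using g1 f0 by simp
  have c0: "cs f0 a = 0" using assms(4,5) fe by simp
  have m: "mass f0 < mass f" using fe by simp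
  obtain h where h: "bal f0 h" using IH[OF m] by blast
  have ch: "cs h a = 0" using h c0 cs_mono[of h f0 a] unfolding bal_def by simp
  show ?thesis
  proof (cases "2 * cs h b \<le> cs f0 b")
    case True
    have "bal f (pl h (E x b))"
      using h ch c0 True assms(4) unfolding fe bal_def
      by (auto simp: add_mono intro: le_SucI split: if_splits)
    then show ?thesis by blast
  next
    case False
    have "bal f (pl h (E x a))"
      using h ch c0 False assms(4) unfolding fe bal_def
      by (auto simp: add_mono intro: le_SucI split: if_splits)
    then show ?thesis by blast
  qed
qed

lemma caseD':
  fixes f :: "'a::finite \<Rightarrow> 'a \<Rightarrow> nat"
  assumes IH: "\<And>g::'a::finite\<Rightarrow>'a\<Rightarrow>nat. mass g < mass f \<Longrightarrow> \<exists>g1. bal g g1"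
    and "f x a \<ge> 1" "f z a \<ge> 1" "x \<noteq> z" "rs f x = 1"
  shows "\<exists>f1. bal f f1"
proof -
  obtain g1 where g1: "f = pl g1 (E x a)" using decomp[of f x a] assms by auto
  have "g1 z a \<ge> 1" using assms g1 by simp
  then obtain f0 where f0: "g1 = pl f0 (E z a)" using decomp[of g1 z a] by auto
  have fe: "f = pl (pl f0 (E z a)) (E x a)" using g1 f0 by simp
  have c0: "rs f0 x = 0" using assms(4,5) fe by simp
  have m: "mass f0 < mass f" using fe by simp
  obtain h where h: "bal f0 h" using IH[OF m] by blast
  have ch: "rs h x = 0" using h c0 rs_mono[of h f0 x] unfolding bal_def by simp
  show ?thesis
  proof (cases "2 * rs h z \<le> rs f0 z")
    case True
    have "bal f (pl h (E z a))"
      using h ch c0 True assms(4) unfolding fe bal_def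
      by (auto simp: add_mono intro: le_SucI split: if_splits)
    then show ?thesis by blast
  next
    case False
    have "bal f (pl h (E x a))"
      using h ch c0 False assms(4) unfolding fe bal_def
      by (auto simp: add_mono intro: le_SucI split: if_splits)
    then show ?thesis by blast
  qed
qed

lemma two_pts:
  fixes g :: "'a::finite \<Rightarrow> nat"
  assumes "(\<Sum>y\<in>UNIV. g y) \<ge> 2" "\<forall>y. g y \<le> 1"
  shows "\<exists>a b. a \<noteq> b \<and> g a \<ge> 1 \<and> g b \<ge> 1"
proof (rule ccontr)
  assume n: "\<not> ?thesis"
  show False
  proof (cases "\<exists>a. g a \<ge> 1")
    case True
    then obtain a where a: "g a \<ge> 1" by blast
    have "\<forall>b. b \<noteq> a \<longrightarrow> g b = 0" using n a by force
    then have "(\<Sum>y\<in>UNIV. g y) = g a" 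
    proof -
      have "(\<Sum>y\<in>UNIV. g y) = g a + (\<Sum>y\<in>UNIV - {a}. g y)" by (simp add: sum.remove)
      also have "(\<Sum>y\<in>UNIV - {a}. g y) = 0" using \<open>\<forall>b. b \<noteq> a \<longrightarrow> g b = 0\<close> by simp
      finally show ?thesis by simp
    qed
    then show False using assms(1) spec[OF assms(2), of a] by linarith
  next
    case False
    then have "(\<Sum>y\<in>UNIV. g y) = 0" by (simp add: not_le)
    then show False using assms by simp
  qed
qed

lemma split_ex: "\<exists>f1. bal (f::'a::finite\<Rightarrow>'a\<Rightarrow>nat) f1"
proof (induction "mass f" arbitrary: f rule: less_induct)
  case less
  have IH: "\<And>g::'a::finite\<Rightarrow>'a\<Rightarrow>nat. mass g < mass f \<Longrightarrow> \<exists>g1. bal g g1"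
    using less by blast
  show ?case
  proof (cases "\<exists>a b. f a b \<ge> 2")
    case True then show ?thesis using caseA[OF IH] by blast
  next
    case nA: False
    then have le1: "\<forall>a b. f a b \<le> 1" by (simp add: not_le less_Suc_eq_le numeral_2_eq_2)
    show ?thesis
    proof (cases "\<exists>x a b z. f x a \<ge> 1 \<and> f x b \<ge> 1 \<and> f z b \<ge> 1 \<and> a \<noteq> b \<and> x \<noteq> z")
      case True then show ?thesis using caseB[OF IH] by blast
    next
      case nB: False
      show ?thesis
      proof (cases "\<exists>x a b. f x a \<ge> 1 \<and> f x b \<ge> 1 \<and> a \<noteq> b \<and> cs f a = 1")
        case True then show ?thesis using caseD[OF IH] by blast
      next
        case nD: False
        show ?thesis
        proof (cases "\<exists>x a z. f x a \<ge> 1 \<and> f z a \<ge> 1 \<and> x \<noteq> z \<and> rs f x = 1")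
          case True then show ?thesis using caseD'[OF IH] by blast
        next
          case nD': False
          have r: "rs f x \<le> 1" for x
          proof (rule ccontr)
            assume "\<not> rs f x \<le> 1"
            then have "(\<Sum>y\<in>UNIV. f x y) \<ge> 2" by (simp add: rs_def)
            then obtain a b where ab: "a \<noteq> b" "f x a \<ge> 1" "f x b \<ge> 1"
              using two_pts[of "f x"] le1 by blast
            have "cs f a \<ge> f x a" unfolding cs_def
              by (rule member_le_sum) auto
            moreover have "cs f a \<noteq> 1" using nD ab by blast
            ultimately have "(\<Sum>z\<in>UNIV. f z a) \<ge> 2" using ab by (simp add: cs_def)
            then obtain z1 z2 where z: "z1 \<noteq> z2" "f z1 a \<ge> 1" "f z2 a \<ge> 1"
              using two_pts[of "\<lambda>z. f z a"] le1 by blast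
            then show False using nB ab by metis
          qed
          have c: "cs f y \<le> 1" for y
          proof (rule ccontr)
            assume "\<not> cs f y \<le> 1"
            then have "(\<Sum>x\<in>UNIV. f x y) \<ge> 2" by (simp add: cs_def)
            then obtain x1 x2 where ab: "x1 \<noteq> x2" "f x1 y \<ge> 1" "f x2 y \<ge> 1"
              using two_pts[of "\<lambda>x. f x y"] le1 by blast
            have "rs f x1 \<ge> f x1 y" unfolding rs_def
              by (rule member_le_sum) auto
            moreover have "rs f x1 \<noteq> 1" using nD' ab by blast
            ultimately have "(\<Sum>b\<in>UNIV. f x1 b) \<ge> 2" using ab by (simp add: rs_def)
            then obtain b1 b2 where z: "b1 \<noteq> b2" "f x1 b1 \<ge> 1" "f x1 b2 \<ge> 1"
              using two_pts[of "f x1"] le1 by blast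
            then show False using nB ab by metis
          qed
          have "bal f (\<lambda>_ _. 0)" using r c unfolding bal_def
            by (auto simp: rs_def cs_def)
          then show ?thesis by blast
        qed
      qed
    qed
  qed
qed


lemma pair_split:
  fixes h :: "'x::finite \<times> 'x \<Rightarrow> real"
  shows "(\<Sum>x\<in>UNIV. \<Sum>y\<in>UNIV. h (x,y)) = (\<Sum>x\<in>UNIV. h (x,x)) + (\<Sum>p\<in>{(x,y). x \<noteq> y}. h p)"
proof -
  have "(\<Sum>x\<in>UNIV. \<Sum>y\<in>UNIV. h (x,y)) = (\<Sum>p\<in>UNIV. h p)"
    by (simp add: sum.cartesian_product UNIV_Times_UNIV[symmetric] del: UNIV_Times_UNIV)
  also have "UNIV = {(x,y). x = y} \<union> {(x,y::'x). x \<noteq> y}" by auto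
  also have "(\<Sum>p\<in>{(x,y). x = y} \<union> {(x,y::'x). x \<noteq> y}. h p)
      = (\<Sum>p\<in>{(x,y). x = y}. h p) + (\<Sum>p\<in>{(x,y::'x). x \<noteq> y}. h p)"
    by (rule sum.union_disjoint) auto
  also have "{(x,y). x = y} = (\<lambda>x. (x,x)) ` (UNIV::'x set)" by auto
  also have "(\<Sum>p\<in>(\<lambda>x. (x,x)) ` (UNIV::'x set). h p) = (\<Sum>x\<in>UNIV. h (x,x))"
    by (subst sum.reindex) (auto simp: inj_on_def)
  finally show ?thesis .
qed

lemma swap_off:
  fixes h :: "'x::finite \<times> 'x \<Rightarrow> real"
  shows "(\<Sum>p\<in>{(x,y). x \<noteq> y}. h (snd p, fst p)) = (\<Sum>p\<in>{(x,y::'x). x \<noteq> y}. h p)"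
proof -
  have "(\<Sum>p\<in>{(x,y::'x). x \<noteq> y}. h p) = (\<Sum>p\<in>(\<lambda>p. (snd p, fst p)) ` {(x,y::'x). x \<noteq> y}. h p)"
    by (rule sum.cong) (auto simp: image_def)
  also have "\<dots> = (\<Sum>p\<in>{(x,y). x \<noteq> y}. h (snd p, fst p))"
    by (subst sum.reindex) (auto simp: inj_on_def)
  finally show ?thesis by simp
qed

lemma finite_bounded:
  fixes b :: "'x::finite \<Rightarrow> nat"
  shows "finite {\<mu>::'x\<Rightarrow>'x\<Rightarrow>nat. \<forall>x y. \<mu> x y \<le> b x}"
proof -
  have "{\<mu>::'x\<Rightarrow>'x\<Rightarrow>nat. \<forall>x y. \<mu> x y \<le> b x} = Pi\<^sub>E UNIV (\<lambda>x. Pi\<^sub>E UNIV (\<lambda>_. {..b x}))"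
    by (auto simp: PiE_UNIV_domain)
  moreover have "finite (Pi\<^sub>E UNIV (\<lambda>x. Pi\<^sub>E (UNIV::'x set) (\<lambda>_. {..b x})))"
    by (intro finite_PiE) auto
  ultimately show ?thesis by simp
qed

lemma fin_R: "finite (roommate_matchings (n::'x::finite \<Rightarrow> nat))"
proof (rule finite_subset[OF _ finite_bounded[of n]])
  show "roommate_matchings n \<subseteq> {\<mu>. \<forall>x y. \<mu> x y \<le> n x}"
  proof (safe)
    fix \<mu> x y assume m: "\<mu> \<in> roommate_matchings n"
    then have c: "2 * \<mu> x x + (\<Sum>y\<in>UNIV - {x}. \<mu> x y) \<le> n x" unfolding roommate_matchings_def by blast
    show "\<mu> x y \<le> n x"
    proof (cases "x = y")
      case True then show ?thesis using c by simp
    next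
      case False
      have "\<mu> x y \<le> (\<Sum>y\<in>UNIV - {x}. \<mu> x y)" by (rule member_le_sum) (use False in auto)
      then show ?thesis using c by simp
    qed
  qed
qed

lemma fin_B: "finite (bipartite_matchings (n::'x::finite \<Rightarrow> nat) m)"
proof (rule finite_subset[OF _ finite_bounded[of n]])
  show "bipartite_matchings n m \<subseteq> {\<mu>. \<forall>x y. \<mu> x y \<le> n x}"
  proof (safe)
    fix \<mu> x y assume m: "\<mu> \<in> bipartite_matchings n m"
    then have c: "(\<Sum>y\<in>UNIV. \<mu> x y) \<le> n x" by (simp add: bipartite_matchings_def)
    have "\<mu> x y \<le> (\<Sum>y\<in>UNIV. \<mu> x y)" by (rule member_le_sum) auto
    then show "\<mu> x y \<le> n x" using c by simp
  qed
qed

definition symz :: "('x \<Rightarrow> 'x \<Rightarrow> nat) \<Rightarrow> 'x \<Rightarrow> 'x \<Rightarrow> nat" where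
  "symz g x y = (if x = y then g x x else g x y + g y x)"

definition Vb :: "('x::finite \<Rightarrow> 'x \<Rightarrow> nat) \<Rightarrow> ('x \<Rightarrow> 'x \<Rightarrow> real) \<Rightarrow> real" where
  "Vb \<nu> \<Phi> = (\<Sum>x\<in>UNIV. \<Sum>y\<in>UNIV. real (\<nu> x y) * (\<Phi> x y / 2))"

lemma S_R_symz:
  assumes sym: "\<forall>x y. \<Phi> x y = \<Phi> y x"
  shows "S_R (symz g) \<Phi> = 2 * Vb g \<Phi>"
proof -
  have "2 * Vb g \<Phi> = (\<Sum>x\<in>UNIV. \<Sum>y\<in>UNIV. real (g x y) * \<Phi> x y)"
    by (simp add: Vb_def sum_distrib_left)
  also have "\<dots> = (\<Sum>x\<in>UNIV. real (g x x) * \<Phi> x x) + (\<Sum>p\<in>{(x,y). x \<noteq> y}. real (g (fst p) (snd p)) * \<Phi> (fst p) (snd p))"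
    using pair_split[of "\<lambda>p. real (g (fst p) (snd p)) * \<Phi> (fst p) (snd p)"] by simp
  finally have e1: "2 * Vb g \<Phi> = \<dots>" .
  have e2: "(\<Sum>p\<in>{(x,y). x \<noteq> y}. real (g (snd p) (fst p)) * \<Phi> (fst p) (snd p))
      = (\<Sum>p\<in>{(x,y). x \<noteq> y}. real (g (fst p) (snd p)) * \<Phi> (fst p) (snd p))"
    using swap_off[of "\<lambda>p. real (g (fst p) (snd p)) * \<Phi> (fst p) (snd p)"] sym by simp
  have "S_R (symz g) \<Phi> = (\<Sum>x\<in>UNIV. real (g x x) * \<Phi> x x) +
     (\<Sum>p\<in>{(x,y). x \<noteq> y}. real (g (fst p) (snd p)) * \<Phi> (fst p) (snd p) / 2
        + real (g (snd p) (fst p)) * \<Phi> (fst p) (snd p) / 2)"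
    unfolding S_R_def symz_def
    by (intro arg_cong2[where f="(+)"] sum.cong) (auto simp: field_simps)
  also have "\<dots> = (\<Sum>x\<in>UNIV. real (g x x) * \<Phi> x x) +
     (\<Sum>p\<in>{(x,y). x \<noteq> y}. real (g (fst p) (snd p)) * \<Phi> (fst p) (snd p))"
    using e2 by (simp add: sum.distrib sum_divide_distrib[symmetric])
  finally show ?thesis using e1 by simp
qed

lemma symz_R:
  fixes g :: "'x::finite \<Rightarrow> 'x \<Rightarrow> nat"
  assumes "\<forall>x. rs g x + cs g x \<le> n x"
  shows "symz g \<in> roommate_matchings n"
proof -
  have "2 * symz g x x + (\<Sum>y\<in>UNIV - {x}. symz g x y) = rs g x + cs g x" for x
  proof -
    have "(\<Sum>y\<in>UNIV - {x}. symz g x y) = (\<Sum>y\<in>UNIV - {x}. g x y) + (\<Sum>y\<in>UNIV - {x}. g y x)"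
      by (simp add: symz_def sum.distrib[symmetric])
    moreover have "rs g x = g x x + (\<Sum>y\<in>UNIV - {x}. g x y)" by (simp add: rs_def sum.remove)
    moreover have "cs g x = g x x + (\<Sum>y\<in>UNIV - {x}. g y x)" by (simp add: cs_def sum.remove)
    ultimately show ?thesis by (simp add: symz_def)
  qed
  moreover have "\<forall>x y. symz g x y = symz g y x" by (simp add: symz_def)
  ultimately show ?thesis using assms unfolding roommate_matchings_def by simp
qed

theorem proposition1:
  fixes n :: "'x::finite \<Rightarrow> nat" and \<Phi> :: "'x \<Rightarrow> 'x \<Rightarrow> real"
  assumes "\<forall>x. even (n x)"
    and "\<forall>x y. \<Phi> x y = \<Phi> y x"
  shows "W_P n \<Phi> = W_B n n (\<lambda>x y. \<Phi> x y / 2)"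
proof -
  let ?R = "roommate_matchings n" and ?B = "bipartite_matchings n n"
  have R0: "(\<lambda>_ _. 0) \<in> ?R" by (simp add: roommate_matchings_def)
  have B0: "(\<lambda>_ _. 0) \<in> ?B" by (simp add: bipartite_matchings_def)
  have WB: "W_B n n (\<lambda>x y. \<Phi> x y / 2) = Max ((\<lambda>\<nu>. Vb \<nu> \<Phi>) ` ?B)"
    by (simp add: W_B_def Vb_def)
  have fR: "finite ((\<lambda>\<mu>. S_R \<mu> \<Phi>) ` ?R)" using fin_R by blast
  have fB: "finite ((\<lambda>\<nu>. Vb \<nu> \<Phi>) ` ?B)" using fin_B by blast
  have le1: "W_P n \<Phi> \<le> W_B n n (\<lambda>x y. \<Phi> x y / 2)"
  proof -
    obtain \<mu> where mu: "\<mu> \<in> ?R" "W_P n \<Phi> = S_R \<mu> \<Phi>"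
      using Max_in[OF fR] R0 unfolding W_P_def by blast
    define \<nu> where "\<nu> = (\<lambda>x y. if x = y then 2 * \<mu> x x else \<mu> x y)"
    have msym: "\<mu> x y = \<mu> y x" for x y using mu(1) by (simp add: roommate_matchings_def)
    have mc: "2 * \<mu> x x + (\<Sum>y\<in>UNIV - {x}. \<mu> x y) \<le> n x" for x
      using mu(1) unfolding roommate_matchings_def by blast
    have rsn: "(\<Sum>y\<in>UNIV. \<nu> x y) = 2 * \<mu> x x + (\<Sum>y\<in>UNIV - {x}. \<mu> x y)" for x
    proof -
      have "(\<Sum>y\<in>UNIV. \<nu> x y) = \<nu> x x + (\<Sum>y\<in>UNIV - {x}. \<nu> x y)" by (simp add: sum.remove)
      also have "(\<Sum>y\<in>UNIV - {x}. \<nu> x y) = (\<Sum>y\<in>UNIV - {x}. \<mu> x y)"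
        by (rule sum.cong) (auto simp: \<nu>_def)
      finally show ?thesis by (simp add: \<nu>_def)
    qed
    have csn: "(\<Sum>x\<in>UNIV. \<nu> x y) = (\<Sum>x\<in>UNIV. \<nu> y x)" for y
      by (rule sum.cong) (auto simp: \<nu>_def msym)
    have nB: "\<nu> \<in> ?B" unfolding bipartite_matchings_def using rsn csn mc by auto
    moreover have "Vb \<nu> \<Phi> = S_R \<mu> \<Phi>"
    proof -
      have "Vb \<nu> \<Phi> = (\<Sum>x\<in>UNIV. real (\<nu> x x) * (\<Phi> x x / 2)) + (\<Sum>p\<in>{(x,y). x \<noteq> y}. real (\<nu> (fst p) (snd p)) * (\<Phi> (fst p) (snd p) / 2))"
        unfolding Vb_def using pair_split[of "\<lambda>p. real (\<nu> (fst p) (snd p)) * (\<Phi> (fst p) (snd p) / 2)"] by simp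
      also have "\<dots> = S_R \<mu> \<Phi>" unfolding S_R_def
        by (intro arg_cong2[where f="(+)"] sum.cong) (auto simp: \<nu>_def)
      finally show ?thesis .
    qed
    ultimately have "S_R \<mu> \<Phi> \<le> Max ((\<lambda>\<nu>. Vb \<nu> \<Phi>) ` ?B)" using Max_ge[OF fB imageI[OF nB, of "\<lambda>\<nu>. Vb \<nu> \<Phi>"]] by simp
    then show ?thesis using mu WB by simp
  qed
  have le2: "W_B n n (\<lambda>x y. \<Phi> x y / 2) \<le> W_P n \<Phi>"
  proof -
    obtain \<nu> where nu: "\<nu> \<in> ?B" "W_B n n (\<lambda>x y. \<Phi> x y / 2) = Vb \<nu> \<Phi>"
      using Max_in[OF fB] B0 WB by auto
    have rn: "rs \<nu> x \<le> n x" "cs \<nu> x \<le> n x" for x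
      using nu(1) by (auto simp: bipartite_matchings_def rs_def cs_def)
    obtain \<nu>1 where b1: "bal \<nu> \<nu>1" using split_ex by blast
    define \<nu>2 where "\<nu>2 = (\<lambda>x y. \<nu> x y - \<nu>1 x y)"
    have le: "\<nu>1 x y \<le> \<nu> x y" for x y using b1 by (simp add: bal_def)
    have rs2: "rs \<nu>2 x = rs \<nu> x - rs \<nu>1 x" for x
      unfolding rs_def \<nu>2_def by (rule sum_subtractf_nat) (simp add: le)
    have cs2: "cs \<nu>2 x = cs \<nu> x - cs \<nu>1 x" for x
      unfolding cs_def \<nu>2_def by (rule sum_subtractf_nat) (simp add: le)
    have rs1le: "rs \<nu>1 x \<le> rs \<nu> x" "cs \<nu>1 x \<le> cs \<nu> x" for x
      using le by (auto simp: rs_def cs_def intro: sum_mono)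
    have ev: "even (n x)" for x using assms(1) by blast
    have h1: "rs \<nu>1 x + cs \<nu>1 x \<le> n x" for x
    proof -
      have "2 * rs \<nu>1 x \<le> n x + 1" "2 * cs \<nu>1 x \<le> n x + 1"
        using b1 rn[of x] unfolding bal_def by (auto dest!: spec[of _ x])
      then show ?thesis using ev[of x] by presburger
    qed
    have h2: "rs \<nu>2 x + cs \<nu>2 x \<le> n x" for x
    proof -
      have "rs \<nu> x \<le> 2 * rs \<nu>1 x + 1" "cs \<nu> x \<le> 2 * cs \<nu>1 x + 1"
        using b1 unfolding bal_def by auto
      then have "2 * rs \<nu>2 x \<le> n x + 1" "2 * cs \<nu>2 x \<le> n x + 1"
        using rn[of x] rs2[of x] cs2[of x] rs1le[of x] by auto
      then show ?thesis using ev[of x] by presburger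
    qed
    have V: "Vb \<nu> \<Phi> = Vb \<nu>1 \<Phi> + Vb \<nu>2 \<Phi>"
      unfolding Vb_def \<nu>2_def
      by (simp add: sum.distrib[symmetric] of_nat_diff le algebra_simps)
    have m1: "S_R (symz \<nu>1) \<Phi> \<le> W_P n \<Phi>"
      unfolding W_P_def using Max_ge[OF fR imageI[OF symz_R[OF allI[OF h1]], of "\<lambda>\<mu>. S_R \<mu> \<Phi>"]] by simp
    have m2: "S_R (symz \<nu>2) \<Phi> \<le> W_P n \<Phi>"
      unfolding W_P_def using Max_ge[OF fR imageI[OF symz_R[OF allI[OF h2]], of "\<lambda>\<mu>. S_R \<mu> \<Phi>"]] by simp
    have "S_R (symz \<nu>1) \<Phi> = 2 * Vb \<nu>1 \<Phi>" "S_R (symz \<nu>2) \<Phi> = 2 * Vb \<nu>2 \<Phi>"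
      using S_R_symz[OF assms(2)] by blast+
    then show ?thesis using m1 m2 V nu(2) by linarith
  qed
  show ?thesis using le1 le2 by simp
qed

end
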